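(* Let $T$ be a tree with $\mathrm{pthin}(T)=2$. Then there exists a simple path $C_0$ in $T$ such that every connected component of $T-V(C_0)$ has proper thinness equal to $1$.
   Context: For a graph $G=(V,E)$, a linear ordering $<$ of $V$ and a partition of $V$ into classes are called strongly consistent if for every triple $r<s<t$ of vertices with $rt\in E$: if $r$ and $s$ belong to the same class then $st\in E$, and if $s$ and $t$ belong to the same class then $rs\in E$. The proper thinness $\mathrm{pthin}(G)$ is the minimum $k$ such that some ordering of $V$ and some partition of $V$ into $k$ classes are strongly consistent. $T-X$ denotes the subgraph induced by $V(T)\setminus X$. *)

theory Defs
  imports Main
begin

definition graph :: "'a set \<Rightarrow> ('a \<Rightarrow> 'a \<Rightarrow> bool) \<Rightarrow> bool" where
  "graph V E \<longleftrightarrow> finite V \<and> (\<forall>x y. E x y \<longrightarrow> x \<in> V \<and> y \<in> V \<and> x \<noteq> y \<and> E y x)"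

definition induced :: "('a \<Rightarrow> 'a \<Rightarrow> bool) \<Rightarrow> 'a set \<Rightarrow> 'a \<Rightarrow> 'a \<Rightarrow> bool" where
  "induced E S = (\<lambda>x y. E x y \<and> x \<in> S \<and> y \<in> S)"

definition connected_graph :: "'a set \<Rightarrow> ('a \<Rightarrow> 'a \<Rightarrow> bool) \<Rightarrow> bool" where
  "connected_graph V E \<longleftrightarrow> V \<noteq> {} \<and> (\<forall>x\<in>V. \<forall>y\<in>V. E\<^sup>*\<^sup>* x y)"

definition simple_path :: "'a set \<Rightarrow> ('a \<Rightarrow> 'a \<Rightarrow> bool) \<Rightarrow> 'a list \<Rightarrow> bool" where
  "simple_path V E ps \<longleftrightarrow> ps \<noteq> [] \<and> distinct ps \<and> set ps \<subseteq> V \<and>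
     (\<forall>i. Suc i < length ps \<longrightarrow> E (ps ! i) (ps ! Suc i))"

definition has_cycle :: "'a set \<Rightarrow> ('a \<Rightarrow> 'a \<Rightarrow> bool) \<Rightarrow> bool" where
  "has_cycle V E \<longleftrightarrow> (\<exists>ps. simple_path V E ps \<and> length ps \<ge> 3 \<and> E (last ps) (hd ps))"

definition tree :: "'a set \<Rightarrow> ('a \<Rightarrow> 'a \<Rightarrow> bool) \<Rightarrow> bool" where
  "tree V E \<longleftrightarrow> graph V E \<and> connected_graph V E \<and> \<not> has_cycle V E"

text \<open>Strong consistency of an ordering (the list vs, r < s iff r occurs before s)
  and a class assignment c.\<close>
definition strongly_consistent ::
  "('a \<Rightarrow> 'a \<Rightarrow> bool) \<Rightarrow> 'a list \<Rightarrow> ('a \<Rightarrow> nat) \<Rightarrow> bool" where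
  "strongly_consistent E vs c \<longleftrightarrow>
     (\<forall>i j l. i < j \<and> j < l \<and> l < length vs \<and> E (vs ! i) (vs ! l) \<longrightarrow>
        (c (vs ! i) = c (vs ! j) \<longrightarrow> E (vs ! j) (vs ! l)) \<and>
        (c (vs ! j) = c (vs ! l) \<longrightarrow> E (vs ! i) (vs ! j)))"

text \<open>Proper thinness: least k such that some linear ordering of V and some partition
  of V into k (nonempty) classes, given by class labels 0..k-1, are strongly consistent.\<close>
definition pthin :: "'a set \<Rightarrow> ('a \<Rightarrow> 'a \<Rightarrow> bool) \<Rightarrow> nat" where
  "pthin V E = (LEAST k. \<exists>vs c. distinct vs \<and> set vs = V \<and> c ` V = {..<k} \<and>
                              strongly_consistent E vs c)"

definition components_minus ::
  "'a set \<Rightarrow> ('a \<Rightarrow> 'a \<Rightarrow> bool) \<Rightarrow> 'a set \<Rightarrow> 'a set set" where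
  "components_minus V E X =
     {{y. (induced E (V - X))\<^sup>*\<^sup>* x y} | x. x \<in> V - X}"

end

theory Submission
  imports Defs
begin


lemma scD:
  assumes "strongly_consistent E vs c" "i < j" "j < l" "l < length vs" "E (vs!i) (vs!l)"
  shows "(c (vs!i) = c (vs!j) \<longrightarrow> E (vs!j) (vs!l)) \<and> (c (vs!j) = c (vs!l) \<longrightarrow> E (vs!i) (vs!j))"
  using assms unfolding strongly_consistent_def by blast

lemma nested_case:
  fixes R T U W S :: 'a and c :: "'a \<Rightarrow> nat"
  assumes sym: "\<And>x y. E x y \<Longrightarrow> E y x"
  and no3: "\<And>x y z. distinct [x,y,z] \<Longrightarrow> E x y \<Longrightarrow> E y z \<Longrightarrow> E z x \<Longrightarrow> False"
  and no4: "\<And>x y z w. distinct [x,y,z,w] \<Longrightarrow> E x y \<Longrightarrow> E y z \<Longrightarrow> E z w \<Longrightarrow> E w x \<Longrightarrow> False"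
  and d: "distinct [R,T,U,W,S]"
  and cl: "c R < 2" "c T < 2" "c U < 2" "c W < 2" "c S < 2"
  and eRT: "E R T" and eUW: "E U W"
  and C1: "(c R = c U \<longrightarrow> E U T) \<and> (c U = c T \<longrightarrow> E R U)"
  and C2: "(c R = c W \<longrightarrow> E W T) \<and> (c W = c T \<longrightarrow> E R W)"
  and C3: "(c R = c S \<longrightarrow> E S T) \<and> (c S = c T \<longrightarrow> E R S)"
  and C4: "(c U = c S \<longrightarrow> E S W) \<and> (c S = c W \<longrightarrow> E U S)"
  shows False
proof -
  have t1: "\<not> (E U T \<and> E W T)" using no3[of U W T] d eUW sym by auto
  have t2: "\<not> (E R U \<and> E R W)" using no3[of U W R] d eUW sym by auto
  have t3: "\<not> (E U T \<and> E R W)" using no4[of U T R W] d eUW eRT sym by auto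
  have t4: "\<not> (E R U \<and> E W T)" using no4[of U R T W] d eUW eRT sym by auto
  have t5: "\<not> (E R U \<and> E U T)" using no3[of R U T] d eRT sym by auto
  have t6: "\<not> (E R S \<and> E S T)" using no3[of R S T] d eRT sym by auto
  have t7: "\<not> (E U S \<and> E S W)" using no3[of U S W] d eUW sym by auto
  have t8: "\<not> (E R W \<and> E W T)" using no3[of R W T] d eRT sym by auto
  have cls: "c R = 0 \<or> c R = 1" "c T = 0 \<or> c T = 1" "c U = 0 \<or> c U = 1" "c W = 0 \<or> c W = 1" "c S = 0 \<or> c S = 1"
    using cl by auto
  show False using cls C1 C2 C3 C4 t1 t2 t3 t4 t5 t6 t7 t8 by (smt (verit))
qed

lemma overlap_case:
  fixes R T U W S :: 'a and c :: "'a \<Rightarrow> nat"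
  assumes sym: "\<And>x y. E x y \<Longrightarrow> E y x"
  and no3: "\<And>x y z. distinct [x,y,z] \<Longrightarrow> E x y \<Longrightarrow> E y z \<Longrightarrow> E z x \<Longrightarrow> False"
  and no4: "\<And>x y z w. distinct [x,y,z,w] \<Longrightarrow> E x y \<Longrightarrow> E y z \<Longrightarrow> E z w \<Longrightarrow> E w x \<Longrightarrow> False"
  and d: "distinct [R,T,U,W,S]"
  and cl: "c R < 2" "c T < 2" "c U < 2" "c W < 2" "c S < 2"
  and eRT: "E R T" and eUW: "E U W"
  and C1: "(c R = c U \<longrightarrow> E U T) \<and> (c U = c T \<longrightarrow> E R U)"
  and C3: "(c R = c S \<longrightarrow> E S T) \<and> (c S = c T \<longrightarrow> E R S)"
  and C4: "(c U = c S \<longrightarrow> E S W) \<and> (c S = c W \<longrightarrow> E U S)"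
  and C5: "(c U = c T \<longrightarrow> E T W) \<and> (c T = c W \<longrightarrow> E U T)"
  and C6: "E U T \<longrightarrow> (c U = c S \<longrightarrow> E S T) \<and> (c S = c T \<longrightarrow> E U S)"
  shows False
proof -
  have o1: "\<not> (E R U \<and> E T W)" using no4[of R U W T] d eUW eRT sym by auto
  have o2: "\<not> (E S W \<and> E S T \<and> E U T)" using no4[of S T U W] d eUW sym by auto
  have o3: "\<not> (E R S \<and> E U S \<and> E U T)" using no4[of S U T R] d eRT sym by auto
  have o4: "\<not> (E S W \<and> E U S)" using no3[of S W U] d eUW sym by auto
  have o5: "\<not> (E R S \<and> E S T)" using no3[of R S T] d eRT sym by auto
  have o7: "\<not> (E U T \<and> E R U)" using no3[of R U T] d eRT sym by auto
  have o8: "\<not> (E U T \<and> E T W)" using no3[of U T W] d eUW sym by auto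
  have cls: "c R = 0 \<or> c R = 1" "c T = 0 \<or> c T = 1" "c U = 0 \<or> c U = 1" "c W = 0 \<or> c W = 1" "c S = 0 \<or> c S = 1"
    using cl by auto
  show False using cls C1 C3 C4 C5 C6 o1 o2 o3 o4 o5 o7 o8 by (smt (verit))
qed



lemma key_idx0:
  assumes sym: "\<And>x y. E x y \<Longrightarrow> E y x"
  and no3: "\<And>x y z. distinct [x,y,z] \<Longrightarrow> E x y \<Longrightarrow> E y z \<Longrightarrow> E z x \<Longrightarrow> False"
  and no4: "\<And>x y z w. distinct [x,y,z,w] \<Longrightarrow> E x y \<Longrightarrow> E y z \<Longrightarrow> E z w \<Longrightarrow> E w x \<Longrightarrow> False"
  and sc: "strongly_consistent E vs c" and dist: "distinct vs" and cls: "\<forall>v\<in>set vs. c v < 2"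
  and as: "a < s" "s < b" "b < length vs" "E (vs!a) (vs!b)"
  and ds: "d < s" "s < e" "e < length vs" "E (vs!d) (vs!e)"
  and ne: "a < d" "b \<noteq> e"
  shows False
proof -
  have len: "a < length vs" "d < length vs" "s < length vs" using as ds by auto
  have cl: "c (vs!a) < 2" "c (vs!b) < 2" "c (vs!d) < 2" "c (vs!e) < 2" "c (vs!s) < 2"
    using cls len as ds by auto
  have neq: "\<And>i j. i < length vs \<Longrightarrow> j < length vs \<Longrightarrow> i \<noteq> j \<Longrightarrow> vs!i \<noteq> vs!j"
    using dist nth_eq_iff_index_eq by blast
  have C1: "(c (vs!a) = c (vs!d) \<longrightarrow> E (vs!d) (vs!b)) \<and> (c (vs!d) = c (vs!b) \<longrightarrow> E (vs!a) (vs!d))"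
    apply (rule scD[OF sc]) using as ds ne by auto
  have C3: "(c (vs!a) = c (vs!s) \<longrightarrow> E (vs!s) (vs!b)) \<and> (c (vs!s) = c (vs!b) \<longrightarrow> E (vs!a) (vs!s))"
    apply (rule scD[OF sc]) using as ds ne by auto
  have C4: "(c (vs!d) = c (vs!s) \<longrightarrow> E (vs!s) (vs!e)) \<and> (c (vs!s) = c (vs!e) \<longrightarrow> E (vs!d) (vs!s))"
    apply (rule scD[OF sc]) using as ds ne by auto
  show False
  proof (cases "e < b")
    case True
    have dd: "distinct [vs!a, vs!b, vs!d, vs!e, vs!s]"
      using neq[of a b] neq[of a d] neq[of a e] neq[of a s] neq[of b d] neq[of b e] neq[of b s]
        neq[of d e] neq[of d s] neq[of e s] len as ds ne True by auto
    have C2: "(c (vs!a) = c (vs!e) \<longrightarrow> E (vs!e) (vs!b)) \<and> (c (vs!e) = c (vs!b) \<longrightarrow> E (vs!a) (vs!e))"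
      apply (rule scD[OF sc]) using as ds ne True ne by auto
    show False
      by (rule nested_case[OF sym no3 no4 dd cl as(4) ds(4) C1 C2 C3 C4])
  next
    case False
    then have be: "b < e" using ne by auto
    have dd: "distinct [vs!a, vs!b, vs!d, vs!e, vs!s]"
      using neq[of a b] neq[of a d] neq[of a e] neq[of a s] neq[of b d] neq[of b e] neq[of b s]
        neq[of d e] neq[of d s] neq[of e s] len as ds ne be by auto
    have C5: "(c (vs!d) = c (vs!b) \<longrightarrow> E (vs!b) (vs!e)) \<and> (c (vs!b) = c (vs!e) \<longrightarrow> E (vs!d) (vs!b))"
      apply (rule scD[OF sc]) using as ds ne be ne by auto
    have C6: "E (vs!d) (vs!b) \<longrightarrow> (c (vs!d) = c (vs!s) \<longrightarrow> E (vs!s) (vs!b)) \<and> (c (vs!s) = c (vs!b) \<longrightarrow> E (vs!d) (vs!s))"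
      apply (rule impI, rule scD[OF sc]) using as ds ne be ne by auto
    show False
      by (rule overlap_case[OF sym no3 no4 dd cl as(4) ds(4) C1 C3 C4 C5 C6])
  qed
qed

lemma key_idx:
  assumes sym: "\<And>x y. E x y \<Longrightarrow> E y x"
  and no3: "\<And>x y z. distinct [x,y,z] \<Longrightarrow> E x y \<Longrightarrow> E y z \<Longrightarrow> E z x \<Longrightarrow> False"
  and no4: "\<And>x y z w. distinct [x,y,z,w] \<Longrightarrow> E x y \<Longrightarrow> E y z \<Longrightarrow> E z w \<Longrightarrow> E w x \<Longrightarrow> False"
  and sc: "strongly_consistent E vs c" and dist: "distinct vs" and cls: "\<forall>v\<in>set vs. c v < 2"
  and as: "a < s" "s < b" "b < length vs" "E (vs!a) (vs!b)"
  and ds: "d < s" "s < e" "e < length vs" "E (vs!d) (vs!e)"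
  and ne: "a \<noteq> d" "b \<noteq> e"
  shows False
proof (cases "a < d")
  case True
  show False by (rule key_idx0[OF sym no3 no4 sc dist cls as ds True ne(2)])
next
  case False
  then have "d < a" using ne by auto
  show False
    apply (rule key_idx0[OF sym no3 no4 sc dist cls ds(1) ds(2) ds(3) ds(4) as(1) as(2) as(3) as(4) \<open>d < a\<close>])
    using ne by auto
qed



definition idx :: "'a list \<Rightarrow> 'a \<Rightarrow> nat" where
  "idx xs v = (THE i. i < length xs \<and> xs!i = v)"

lemma idx_nth: "distinct xs \<Longrightarrow> i < length xs \<Longrightarrow> idx xs (xs!i) = i"
  unfolding idx_def by (rule the_equality) (auto simp: nth_eq_iff_index_eq)

lemma idx_mem: "distinct xs \<Longrightarrow> v \<in> set xs \<Longrightarrow> idx xs v < length xs \<and> xs ! idx xs v = v"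
proof -
  assume d: "distinct xs" and v: "v \<in> set xs"
  then obtain i where i: "i < length xs" "xs!i = v" by (auto simp: in_set_conv_nth)
  then show ?thesis using idx_nth[OF d i(1)] by simp
qed

lemma crossing: "(g::nat\<Rightarrow>nat) 0 < x \<Longrightarrow> x \<le> g m \<Longrightarrow> \<exists>k<m. g k < x \<and> x \<le> g (Suc k)"
proof (induction m)
  case 0 then show ?case by simp
next
  case (Suc m)
  show ?case
  proof (cases "g m < x")
    case True then show ?thesis using Suc by auto
  next
    case False then show ?thesis using Suc by (metis less_Suc_eq not_le)
  qed
qed

lemma graphD: "graph V E \<Longrightarrow> E x y \<Longrightarrow> x \<in> V \<and> y \<in> V \<and> x \<noteq> y \<and> E y x"
  unfolding graph_def by blast

lemma tree_no3:
  assumes "tree V E" "distinct [x,y,z]" "E x y" "E y z" "E z x" shows False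
proof -
  have g: "graph V E" using assms(1) by (simp add: tree_def)
  have "simple_path V E [x,y,z]"
    unfolding simple_path_def
  proof (intro conjI allI impI)
    fix i assume "Suc i < length [x,y,z]"
    then have "i = 0 \<or> i = 1" by auto
    then show "E ([x,y,z] ! i) ([x,y,z] ! Suc i)" using assms by auto
  qed (use assms graphD[OF g] in auto)
  then have "has_cycle V E" unfolding has_cycle_def using assms by (intro exI[of _ "[x,y,z]"]) auto
  then show False using assms(1) by (simp add: tree_def)
qed

lemma tree_no4:
  assumes "tree V E" "distinct [x,y,z,w]" "E x y" "E y z" "E z w" "E w x" shows False
proof -
  have g: "graph V E" using assms(1) by (simp add: tree_def)
  have "simple_path V E [x,y,z,w]"
    unfolding simple_path_def
  proof (intro conjI allI impI)
    fix i assume "Suc i < length [x,y,z,w]"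
    then have "i = 0 \<or> i = 1 \<or> i = 2" by auto
    then show "E ([x,y,z,w] ! i) ([x,y,z,w] ! Suc i)" using assms by auto
  qed (use assms graphD[OF g] in auto)
  then have "has_cycle V E" unfolding has_cycle_def using assms by (intro exI[of _ "[x,y,z,w]"]) auto
  then show False using assms(1) by (simp add: tree_def)
qed

lemma walk_path:
  assumes g: "graph V E" and r: "E\<^sup>*\<^sup>* x y" and x: "x \<in> V"
  shows "\<exists>ps. simple_path V E ps \<and> hd ps = x \<and> last ps = y"
  using r
proof (induction rule: rtranclp_induct)
  case base
  show ?case by (rule exI[of _ "[x]"]) (simp add: simple_path_def x)
next
  case (step y z)
  then obtain ps where ps: "simple_path V E ps" "hd ps = x" "last ps = y" by blast
  have pne: "ps \<noteq> []" and pd: "distinct ps" and pV: "set ps \<subseteq> V"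
    and pe: "\<And>i. Suc i < length ps \<Longrightarrow> E (ps!i) (ps!Suc i)"
    using ps(1) unfolding simple_path_def by auto
  show ?case
  proof (cases "z \<in> set ps")
    case True
    then obtain k where k: "k < length ps" "ps!k = z" by (auto simp: in_set_conv_nth)
    let ?q = "take (Suc k) ps"
    have "simple_path V E ?q"
      unfolding simple_path_def using pne pd pV pe k
      by (auto dest: in_set_takeD)
    moreover have "hd ?q = x" using ps(2) pne by (simp add: hd_take)
    moreover have "last ?q = z"
    proof -
      have l: "length ?q = Suc k" using k by simp
      have "?q \<noteq> []" using l by (metis list.size(3) nat.distinct(1))
      then have "last ?q = ?q ! k" using l by (simp add: last_conv_nth)
      then show ?thesis using k by simp
    qed
    ultimately show ?thesis by blast
  next
    case False
    let ?q = "ps @ [z]"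
    have zV: "z \<in> V" using graphD[OF g step(2)] by blast
    have "simple_path V E ?q"
      unfolding simple_path_def
    proof (intro conjI allI impI)
      fix i assume i: "Suc i < length ?q"
      show "E (?q ! i) (?q ! Suc i)"
      proof (cases "Suc i < length ps")
        case True then show ?thesis using pe[OF True] by (simp add: nth_append)
      next
        case False
        then have "i = length ps - 1" using i by auto
        then show ?thesis using pne ps(3) step(2)
          by (simp add: nth_append last_conv_nth)
      qed
    qed (use pne pd pV False zV in auto)
    moreover have "hd ?q = x" using ps(2) pne by simp
    moreover have "last ?q = z" by simp
    ultimately show ?thesis by blast
  qed
qed

lemma induced_reach: "(induced E S)\<^sup>*\<^sup>* x y \<Longrightarrow> x \<in> S \<Longrightarrow> y \<in> S"
  by (induction rule: rtranclp_induct) (auto simp: induced_def)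



lemma pthin_exists:
  assumes "finite V"
  shows "\<exists>k vs c. distinct vs \<and> set vs = V \<and> c ` V = {..<k} \<and> strongly_consistent E vs c"
proof -
  obtain xs where xs: "set xs = V" "distinct xs" using finite_distinct_list[OF assms] by blast
  have img: "idx xs ` V = {..<length xs}"
  proof
    show "idx xs ` V \<subseteq> {..<length xs}" using idx_mem[OF xs(2)] xs(1) by auto
    show "{..<length xs} \<subseteq> idx xs ` V"
    proof
      fix i assume "i \<in> {..<length xs}"
      then have i: "i < length xs" by simp
      then have "i = idx xs (xs!i)" using idx_nth[OF xs(2)] by simp
      moreover have "xs!i \<in> V" using i xs(1) by auto
      ultimately show "i \<in> idx xs ` V" by blast
    qed
  qed
  have "strongly_consistent E xs (idx xs)"
    unfolding strongly_consistent_def using idx_nth[OF xs(2)] by auto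
  then show ?thesis using xs img by blast
qed

lemma pthin_witness:
  assumes "finite V" "pthin V E = k"
  shows "\<exists>vs c. distinct vs \<and> set vs = V \<and> c ` V = {..<k} \<and> strongly_consistent E vs c"
proof -
  let ?P = "\<lambda>k. \<exists>vs c. distinct vs \<and> set vs = V \<and> c ` V = {..<k} \<and> strongly_consistent E vs c"
  have "?P (Least ?P)" by (rule LeastI_ex) (rule pthin_exists[OF assms(1)])
  then show ?thesis using assms(2) unfolding pthin_def by simp
qed

lemma pthin_one:
  assumes "C \<noteq> {}" "distinct vs" "set vs = C" "strongly_consistent E' vs (\<lambda>_. 0)"
  shows "pthin C E' = 1"
  unfolding pthin_def
proof (rule Least_equality)
  have "(\<lambda>_. 0::nat) ` C = {..<1}" using assms(1) by auto
  then show "\<exists>vs' c. distinct vs' \<and> set vs' = C \<and> c ` C = {..<1} \<and> strongly_consistent E' vs' c"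
    using assms by blast
next
  fix y assume "\<exists>vs c. distinct vs \<and> set vs = C \<and> c ` C = {..<y} \<and> strongly_consistent E' vs c"
  then obtain c where "c ` C = {..<y}" by blast
  then show "1 \<le> y" using assms(1) by (cases y) auto
qed

theorem corollary3:
  fixes V :: "'a set" and E :: "'a \<Rightarrow> 'a \<Rightarrow> bool"
  assumes "tree V E" and "pthin V E = 2"
  shows "\<exists>C0. simple_path V E C0 \<and>
           (\<forall>C \<in> components_minus V E (set C0). pthin C (induced E C) = 1)"
proof -
  have g: "graph V E" and conn: "connected_graph V E" using assms(1) by (auto simp: tree_def)
  have fin: "finite V" using g by (simp add: graph_def)
  obtain vs c where vsd: "distinct vs" and vsV: "set vs = V" and cim: "c ` V = {..<2}"
    and sc: "strongly_consistent E vs c"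
    using pthin_witness[OF fin assms(2)] by blast
  have cls: "\<forall>v\<in>set vs. c v < 2" using cim vsV by auto
  have sym: "\<And>x y. E x y \<Longrightarrow> E y x" using graphD[OF g] by blast
  have no3: "\<And>x y z. distinct [x,y,z] \<Longrightarrow> E x y \<Longrightarrow> E y z \<Longrightarrow> E z x \<Longrightarrow> False"
    using tree_no3[OF assms(1)] by blast
  have no4: "\<And>x y z w. distinct [x,y,z,w] \<Longrightarrow> E x y \<Longrightarrow> E y z \<Longrightarrow> E z w \<Longrightarrow> E w x \<Longrightarrow> False"
    using tree_no4[OF assms(1)] by blast
  have Vne: "V \<noteq> {}" using conn by (simp add: connected_graph_def)
  then have npos: "0 < length vs" using vsV by auto
  define f where "f = vs ! 0"
  define l where "l = vs ! (length vs - 1)"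
  have fV: "f \<in> V" and lV: "l \<in> V" using npos vsV unfolding f_def l_def by auto
  have "E\<^sup>*\<^sup>* f l" using conn fV lV by (simp add: connected_graph_def)
  then obtain P where P: "simple_path V E P" "hd P = f" "last P = l"
    using walk_path[OF g _ fV] by blast
  have Pne: "P \<noteq> []" and PV: "set P \<subseteq> V"
    and Pe: "\<And>i. Suc i < length P \<Longrightarrow> E (P!i) (P!Suc i)"
    using P(1) unfolding simple_path_def by auto
  show ?thesis
  proof (intro exI[of _ P] conjI ballI)
    show "simple_path V E P" by (rule P(1))
  next
    fix C assume "C \<in> components_minus V E (set P)"
    then obtain x where x: "x \<in> V - set P" and Cdef: "C = {y. (induced E (V - set P))\<^sup>*\<^sup>* x y}"
      unfolding components_minus_def by blast
    have CS: "C \<subseteq> V - set P" using induced_reach[OF _ x] Cdef by blast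
    have xC: "x \<in> C" using Cdef by simp
    define vs' where "vs' = filter (\<lambda>v. v \<in> C) vs"
    have d': "distinct vs'" using vsd by (simp add: vs'_def)
    have set': "set vs' = C" using CS vsV by (auto simp: vs'_def)
    have sw: "sorted_wrt (\<lambda>x y. idx vs x < idx vs y) vs"
      unfolding sorted_wrt_iff_nth_less using idx_nth[OF vsd] by auto
    have ord: "\<And>i j. i < j \<Longrightarrow> j < length vs' \<Longrightarrow> idx vs (vs'!i) < idx vs (vs'!j)"
      using sorted_wrt_filter[OF sw, of "\<lambda>v. v \<in> C"] unfolding vs'_def sorted_wrt_iff_nth_less
      by blast
    have sc': "strongly_consistent (induced E C) vs' (\<lambda>_. 0)"
      unfolding strongly_consistent_def
    proof (intro allI impI)
      fix i j k
      assume H: "i < j \<and> j < k \<and> k < length vs' \<and> induced E C (vs'!i) (vs'!k)"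
      define u where "u = vs'!i"
      define s where "s = vs'!j"
      define w where "w = vs'!k"
      have mem: "u \<in> C" "s \<in> C" "w \<in> C" using H set' unfolding u_def s_def w_def by auto
      then have nP: "u \<notin> set P" "s \<notin> set P" "w \<notin> set P" and inV: "u \<in> set vs" "s \<in> set vs" "w \<in> set vs"
        using CS vsV by auto
      define iu where "iu = idx vs u"
      define iss where "iss = idx vs s"
      define iw where "iw = idx vs w"
      have iu: "iu < length vs" "vs!iu = u" using idx_mem[OF vsd inV(1)] iu_def by auto
      have iss: "iss < length vs" "vs!iss = s" using idx_mem[OF vsd inV(2)] iss_def by auto
      have iw: "iw < length vs" "vs!iw = w" using idx_mem[OF vsd inV(3)] iw_def by auto
      have o1: "iu < iss" using ord[of i j] H unfolding iu_def iss_def u_def s_def by auto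
      have o2: "iss < iw" using ord[of j k] H unfolding iw_def iss_def w_def s_def by auto
      have Euw: "E u w" using H unfolding induced_def u_def w_def by auto
      define gk where "gk = (\<lambda>k. idx vs (P!k))"
      define m where "m = length P - 1"
      have "P!0 = f" using P(2) Pne by (simp add: hd_conv_nth)
      then have g0: "gk 0 = 0" unfolding gk_def f_def using idx_nth[OF vsd npos] by simp
      have "iss \<noteq> 0"
      proof
        assume "iss = 0"
        then have "s = f" using iss unfolding f_def by simp
        moreover have "f \<in> set P" using P(2) Pne by auto
        ultimately show False using nP by simp
      qed
      then have is0: "gk 0 < iss" using g0 by simp
      have "P!m = l" using P(3) Pne unfolding m_def by (simp add: last_conv_nth)
      then have "gk m = length vs - 1" unfolding gk_def l_def using idx_nth[OF vsd] npos by simp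
      then have ism: "iss \<le> gk m" using iss by simp
      obtain q where q: "q < m" "gk q < iss" "iss \<le> gk (Suc q)" using crossing[OF is0 ism] by blast
      have qlen: "Suc q < length P" using q(1) m_def by simp
      have Pq: "P!q \<in> set vs" "P!Suc q \<in> set vs" using qlen PV vsV by auto
      have a: "gk q < length vs" "vs!(gk q) = P!q" using idx_mem[OF vsd Pq(1)] gk_def by auto
      have b: "gk (Suc q) < length vs" "vs!(gk (Suc q)) = P!Suc q" using idx_mem[OF vsd Pq(2)] gk_def by auto
      have PqP: "P!q \<in> set P" "P!Suc q \<in> set P" using qlen by auto
      have "gk (Suc q) \<noteq> iss" using b(2) iss(2) PqP nP by metis
      then have sb: "iss < gk (Suc q)" using q(3) by simp
      have Eab: "E (vs!(gk q)) (vs!(gk (Suc q)))" using a b Pe[OF qlen] by simp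
      have Ede: "E (vs!iu) (vs!iw)" using iu iw Euw by simp
      have ne1: "gk q \<noteq> iu" using a(2) iu(2) PqP nP by metis
      have ne2: "gk (Suc q) \<noteq> iw" using b(2) iw(2) PqP nP by metis
      have False
        by (rule key_idx[OF sym no3 no4 sc vsd cls q(2) sb b(1) Eab o1 o2 iw(1) Ede ne1 ne2])
      then show "((\<lambda>_. 0::nat) (vs'!i) = (\<lambda>_. 0) (vs'!j) \<longrightarrow> induced E C (vs'!j) (vs'!k)) \<and>
            ((\<lambda>_. 0::nat) (vs'!j) = (\<lambda>_. 0) (vs'!k) \<longrightarrow> induced E C (vs'!i) (vs'!j))"
        by blast
    qed
    show "pthin C (induced E C) = 1"
      by (rule pthin_one[OF _ d' set' sc']) (use xC in auto)
  qed
qed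

end
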